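(* Let $G$ be a commutative group, $g\in\mathrm{Aut}(G)$, and $t_1,t_2$ fixed points of $g$. Define $f_i(x)=g(x)t_i$ for $i=1,2$. If there is $z\in G$ with $g(z)=z^{-1}t_1^{-1}t_2$, then $G(f_1)$ and $G(f_2)$ are isotopic.
   Context: Construction $G(f)$: for a commutative group $G$ (written multiplicatively) and a bijection $f:G\to G$, let $\overline{G}=\{\overline{x}:x\in G\}$ be a disjoint copy of $G$, and let $G(f)$ be $G\cup\overline{G}$ with multiplication $x*y=xy$, $x*\overline{y}=\overline{xy}$, $\overline{x}*y=\overline{xy}$, $\overline{x}*\overline{y}=f(xy)$ for $x,y\in G$. Loops $(Q_1,* )$ and $(Q_2,\circ)$ are isotopic if there are bijections $\alpha,\beta,\gamma:Q_1\to Q_2$ with $\alpha(u)\circ\beta(v)=\gamma(u*v)$ for all $u,v\in Q_1$. *)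

theory Defs
  imports "HOL-Algebra.Algebra"
begin

text \<open>The construction G(f): carrier is a disjoint union of two copies of the group carrier;
  Inl x stands for x, Inr x stands for the barred copy of x.\<close>

definition Gf_carrier :: "('a, 'b) monoid_scheme \<Rightarrow> ('a + 'a) set" where
  "Gf_carrier G = carrier G <+> carrier G"

fun Gf_mult :: "('a, 'b) monoid_scheme \<Rightarrow> ('a \<Rightarrow> 'a) \<Rightarrow> 'a + 'a \<Rightarrow> 'a + 'a \<Rightarrow> 'a + 'a" where
  "Gf_mult G f (Inl x) (Inl y) = Inl (x \<otimes>\<^bsub>G\<^esub> y)"
| "Gf_mult G f (Inl x) (Inr y) = Inr (x \<otimes>\<^bsub>G\<^esub> y)"
| "Gf_mult G f (Inr x) (Inl y) = Inr (x \<otimes>\<^bsub>G\<^esub> y)"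
| "Gf_mult G f (Inr x) (Inr y) = Inl (f (x \<otimes>\<^bsub>G\<^esub> y))"

definition isotopic :: "'a set \<Rightarrow> ('a \<Rightarrow> 'a \<Rightarrow> 'a) \<Rightarrow> 'c set \<Rightarrow> ('c \<Rightarrow> 'c \<Rightarrow> 'c) \<Rightarrow> bool" where
  "isotopic Q1 m1 Q2 m2 \<longleftrightarrow>
     (\<exists>\<alpha> \<beta> \<gamma>. bij_betw \<alpha> Q1 Q2 \<and> bij_betw \<beta> Q1 Q2 \<and> bij_betw \<gamma> Q1 Q2 \<and>
        (\<forall>u\<in>Q1. \<forall>v\<in>Q1. m2 (\<alpha> u) (\<beta> v) = \<gamma> (m1 u v)))"

end

theory Submission
  imports Defs
begin

lemma (in group) transl_bij:
  assumes "c \<in> carrier G"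
  shows "bij_betw (\<lambda>x. c \<otimes> x) (carrier G) (carrier G)"
proof (rule bij_betwI[where g="\<lambda>x. inv c \<otimes> x"])
  show "(\<lambda>x. c \<otimes> x) \<in> carrier G \<rightarrow> carrier G" using assms by auto
  show "(\<lambda>x. inv c \<otimes> x) \<in> carrier G \<rightarrow> carrier G" using assms by auto
  show "\<And>x. x \<in> carrier G \<Longrightarrow> inv c \<otimes> (c \<otimes> x) = x" using assms
    by (simp add: m_assoc[symmetric])
  show "\<And>x. x \<in> carrier G \<Longrightarrow> c \<otimes> (inv c \<otimes> x) = x" using assms
    by (simp add: m_assoc[symmetric])
qed

lemma sum_bij:
  assumes "bij_betw f A A" "bij_betw h A A"
  shows "bij_betw (case_sum (\<lambda>x. Inl (f x)) (\<lambda>x. Inr (h x))) (A <+> A) (A <+> A)"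
proof -
  have i: "inj_on (case_sum (\<lambda>x. Inl (f x)) (\<lambda>x. Inr (h x))) (A <+> A)"
    using assms unfolding bij_betw_def inj_on_def by (auto split: sum.splits)
  have "case_sum (\<lambda>x. Inl (f x)) (\<lambda>x. Inr (h x)) ` (A <+> A) = Inl ` (f ` A) \<union> Inr ` (h ` A)"
    by (auto simp: image_iff) (metis InlI sum.case(1), metis InrI sum.case(2))
  also have "\<dots> = A <+> A" using assms by (simp add: bij_betw_def Plus_def)
  finally show ?thesis using i by (simp add: bij_betw_def)
qed

lemma (in comm_group) cancel_aux:
  assumes "a \<in> carrier G" "b \<in> carrier G" "c \<in> carrier G" "w \<in> carrier G"
  shows "a \<otimes> b \<otimes> inv c \<otimes> w \<otimes> c = a \<otimes> (w \<otimes> b)"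
proof -
  have cw: "c \<otimes> (w \<otimes> inv c) = w"
  proof -
    have "c \<otimes> (w \<otimes> inv c) = w \<otimes> (c \<otimes> inv c)" using assms by (simp add: m_lcomm[of c w "inv c"])
    thus ?thesis using assms by simp
  qed
  have "a \<otimes> b \<otimes> inv c \<otimes> w \<otimes> c = a \<otimes> (w \<otimes> b) \<otimes> (inv c \<otimes> c)"
    using assms cw by (simp add: m_ac)
  also have "\<dots> = a \<otimes> (w \<otimes> b)" using assms by (simp only: l_inv r_one m_closed)
  finally show ?thesis .
qed

lemma (in comm_group) aux:
  fixes g :: "'a \<Rightarrow> 'a" and t1 t2 :: 'a
  assumes "True"
    and "g \<in> iso G G"
    and "t1 \<in> carrier G" and "t2 \<in> carrier G"
    and "g t1 = t1" and "g t2 = t2"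
    and "\<exists>z\<in>carrier G. g z = inv\<^bsub>G\<^esub> z \<otimes>\<^bsub>G\<^esub> inv\<^bsub>G\<^esub> t1 \<otimes>\<^bsub>G\<^esub> t2"
  shows "isotopic (Gf_carrier G) (Gf_mult G (\<lambda>x. g x \<otimes>\<^bsub>G\<^esub> t1))
                  (Gf_carrier G) (Gf_mult G (\<lambda>x. g x \<otimes>\<^bsub>G\<^esub> t2))"
proof -
  obtain z where z: "z \<in> carrier G" "g z = inv z \<otimes> inv t1 \<otimes> t2" using assms(7) by blast
  have gh: "g \<in> hom G G" using assms(2) by (simp add: iso_def)
  have gc: "\<And>x. x \<in> carrier G \<Longrightarrow> g x \<in> carrier G" using gh by (auto simp: hom_def)
  have gm: "\<And>x y. x \<in> carrier G \<Longrightarrow> y \<in> carrier G \<Longrightarrow> g (x \<otimes> y) = g x \<otimes> g y"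
    using gh by (simp add: hom_def)
  have ginv: "g (inv z) = z \<otimes> t1 \<otimes> inv t2"
  proof -
    have g1: "g \<one> = \<one>"
    proof -
      have "g \<one> \<otimes> g \<one> = g \<one> \<otimes> \<one>" using gm[of \<one> \<one>] gc[of \<one>] by simp
      thus ?thesis using gc[of \<one>] by (metis l_cancel one_closed)
    qed
    have "g (inv z) \<otimes> g z = \<one>" using gm[of "inv z" z] z g1 by simp
    hence "g (inv z) = inv (g z)" using z gc by (metis inv_char m_comm inv_closed)
    also have "\<dots> = z \<otimes> t1 \<otimes> inv t2" using z assms(3,4)
      by (simp add: inv_mult_group inv_mult m_ac)
    finally show ?thesis .
  qed
  define \<alpha> :: "'a + 'a \<Rightarrow> 'a + 'a" where "\<alpha> = case_sum (\<lambda>x. Inl x) (\<lambda>x. Inr (inv z \<otimes> x))"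
  define \<beta> :: "'a + 'a \<Rightarrow> 'a + 'a" where "\<beta> = case_sum (\<lambda>x. Inl (z \<otimes> x)) (\<lambda>x. Inr x)"
  have idb: "bij_betw (\<lambda>x. x) (carrier G) (carrier G)" by (simp add: bij_betw_def)
  have bz: "bij_betw (\<lambda>x. z \<otimes> x) (carrier G) (carrier G)"
    using transl_bij[OF z(1)] .
  have biz: "bij_betw (\<lambda>x. inv z \<otimes> x) (carrier G) (carrier G)"
    using transl_bij[OF inv_closed[OF z(1)]] .
  have ba: "bij_betw \<alpha> (Gf_carrier G) (Gf_carrier G)"
    unfolding \<alpha>_def Gf_carrier_def using sum_bij[OF idb biz] .
  have bb: "bij_betw \<beta> (Gf_carrier G) (Gf_carrier G)"
    unfolding \<beta>_def Gf_carrier_def using sum_bij[OF bz idb] .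
  have key: "\<forall>u\<in>Gf_carrier G. \<forall>v\<in>Gf_carrier G. Gf_mult G (\<lambda>x. g x \<otimes> t2) (\<alpha> u) (\<beta> v) = \<beta> (Gf_mult G (\<lambda>x. g x \<otimes> t1) u v)"
  proof (intro ballI)
    fix u v assume u: "u \<in> Gf_carrier G" and v: "v \<in> Gf_carrier G"
    show "Gf_mult G (\<lambda>x. g x \<otimes> t2) (\<alpha> u) (\<beta> v) = \<beta> (Gf_mult G (\<lambda>x. g x \<otimes> t1) u v)"
    proof (cases u; cases v)
      fix x y assume "u = Inl x" "v = Inl y"
      thus ?thesis using u v z unfolding \<alpha>_def \<beta>_def Gf_carrier_def by (auto simp: m_lcomm)
    next
      fix x y assume "u = Inl x" "v = Inr y"
      thus ?thesis using u v z unfolding \<alpha>_def \<beta>_def Gf_carrier_def by auto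
    next
      fix x y assume "u = Inr x" "v = Inl y"
      thus ?thesis using u v z unfolding \<alpha>_def \<beta>_def Gf_carrier_def
        by (auto simp: m_assoc[symmetric] m_comm[of _ z])
    next
      fix x y assume xy: "u = Inr x" "v = Inr y"
      hence xc: "x \<in> carrier G" "y \<in> carrier G" using u v unfolding Gf_carrier_def by auto
      have "g (inv z \<otimes> x \<otimes> y) \<otimes> t2 = z \<otimes> t1 \<otimes> inv t2 \<otimes> g (x \<otimes> y) \<otimes> t2"
        using xc z gm ginv by (simp add: m_assoc)
      also have "\<dots> = z \<otimes> (g (x \<otimes> y) \<otimes> t1)"
        using cancel_aux xc z gc assms(3,4) by simp
      finally show ?thesis using xy unfolding \<alpha>_def \<beta>_def by simp
    qed
  qed
  show ?thesis unfolding isotopic_def using ba bb key by blast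
qed

theorem lemma6p1:
  fixes G :: "('a, 'b) monoid_scheme" and g :: "'a \<Rightarrow> 'a" and t1 t2 :: 'a
  assumes "comm_group G"
    and "g \<in> iso G G"
    and "t1 \<in> carrier G" and "t2 \<in> carrier G"
    and "g t1 = t1" and "g t2 = t2"
    and "\<exists>z\<in>carrier G. g z = inv\<^bsub>G\<^esub> z \<otimes>\<^bsub>G\<^esub> inv\<^bsub>G\<^esub> t1 \<otimes>\<^bsub>G\<^esub> t2"
  shows "isotopic (Gf_carrier G) (Gf_mult G (\<lambda>x. g x \<otimes>\<^bsub>G\<^esub> t1))
                  (Gf_carrier G) (Gf_mult G (\<lambda>x. g x \<otimes>\<^bsub>G\<^esub> t2))"
  using comm_group.aux[OF assms(1) TrueI assms(2-7)] .

end
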